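(* Let $f$ be a real-analytic function on a neighborhood of $[-1,0]$ with $f(-1)=0$ and $f'(x)<0$ for $-1\le x\le 0$. Let $D_2$ be the open triangle bounded by the segment $\{(x,0):-1\le x\le 1\}$ and the lines $y=-x-1$ and $y=x-1$ (with vertices $(-1,0)$, $(1,0)$, $(0,-1)$), and let $AC=\{(x,-x-1):-1\le x\le 0\}$. Then there exists an open set $D_1$ in the upper half-plane $y>0$, adjacent to the whole interval $\{(x,0):-1<x<1\}$ (i.e. $D=D_1\cup\{(x,0):-1<x<1\}\cup D_2$ is a domain), and a function $U\in C^1(D)\cap C^2(D_1)\cap C^2(D_2)$ satisfying $$\frac{\partial^2 U}{\partial x^2}+\operatorname{sign}(U)\,\frac{\partial^2 U}{\partial y^2}=0$$ in $D_1\cup D_2$, with $U>0$ in $D_1$, $U<0$ in $D_2$, and $U(x,-x-1)=f(x)$ for $-1\le x\le 0$. Explicitly, $U(x,y)=f\!\left(\tfrac{x-y-1}{2}\right)-f\!\left(\tfrac{x+y-1}{2}\right)$ in $D_2$, and $U(x,y)=i\left(f\!\left(\tfrac{z-1}{2}\right)-f\!\left(\tfrac{\bar z-1}{2}\right)\right)$, $z=x+iy$, in $D_1$, where $f$ denotes its holomorphic extension.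
   Context: $\operatorname{sign}(U)$ equals $1$ if $U>0$, $-1$ if $U<0$, $0$ if $U=0$. Thus the equation is the Laplace equation where $U>0$ and the wave equation where $U<0$. The lines $y=-x-1$ and $y=x-1$ are characteristics of the wave equation. *)

theory Defs
  imports "HOL-Analysis.Analysis"
begin

definition real_analytic_on :: "(real \<Rightarrow> real) \<Rightarrow> real set \<Rightarrow> bool" where
  "real_analytic_on f S \<longleftrightarrow>
     (\<forall>x\<in>S. \<exists>r>0. \<exists>a::nat \<Rightarrow> real.
        \<forall>y. \<bar>y - x\<bar> < r \<longrightarrow> (\<lambda>n. a n * (y - x) ^ n) sums f y)"

definition pdx :: "(real \<times> real \<Rightarrow> real) \<Rightarrow> real \<times> real \<Rightarrow> real" where
  "pdx U = (\<lambda>(x, y). deriv (\<lambda>t. U (t, y)) x)"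

definition pdy :: "(real \<times> real \<Rightarrow> real) \<Rightarrow> real \<times> real \<Rightarrow> real" where
  "pdy U = (\<lambda>(x, y). deriv (\<lambda>t. U (x, t)) y)"

definition C1_on :: "(real \<times> real) set \<Rightarrow> (real \<times> real \<Rightarrow> real) \<Rightarrow> bool" where
  "C1_on D U \<longleftrightarrow> continuous_on D U \<and>
     (\<forall>(x, y)\<in>D. (\<lambda>t. U (t, y)) differentiable (at x) \<and> (\<lambda>t. U (x, t)) differentiable (at y)) \<and>
     continuous_on D (pdx U) \<and> continuous_on D (pdy U)"

definition C2_on :: "(real \<times> real) set \<Rightarrow> (real \<times> real \<Rightarrow> real) \<Rightarrow> bool" where
  "C2_on D U \<longleftrightarrow> C1_on D U \<and> C1_on D (pdx U) \<and> C1_on D (pdy U)"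

definition D2 :: "(real \<times> real) set" where
  "D2 = {(x, y). y < 0 \<and> y > - x - 1 \<and> y > x - 1}"

end

theory Submission
  imports Defs "HOL-Complex_Analysis.Complex_Analysis"
begin



lemma deriv_split:
  fixes h :: "real \<Rightarrow> real"
  assumes "(h has_real_derivative L) (at x within {..x})"
      and "(h has_real_derivative L) (at x within {x..})"
  shows "(h has_real_derivative L) (at x)"
proof -
  have u: "{..x} \<union> {x..} = (UNIV::real set)" by auto
  have e: "at x = at x within ({..x} \<union> {x..})" by (simp only: u) 
  show ?thesis using assms unfolding has_field_derivative_iff e
    by (simp add: Lim_within_Un)
qed

lemma Re_aff:
  assumes "(H has_field_derivative H') (at (c * of_real t + d))"
  shows "((\<lambda>s. Re (H (c * of_real s + d))) has_real_derivative Re (H' * c)) (at t)"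
proof -
  have 1: "((\<lambda>s. c * complex_of_real s + d) has_vector_derivative c) (at t)"
    by (auto intro!: derivative_eq_intros)
  have 2: "((H \<circ> (\<lambda>s. c * complex_of_real s + d)) has_vector_derivative c * H') (at t)"
    using field_vector_diff_chain_at[OF 1] assms by simp
  have 3: "((\<lambda>s. Re ((H \<circ> (\<lambda>s. c * complex_of_real s + d)) s)) has_vector_derivative Re (c * H')) (at t)"
    using bounded_linear.has_vector_derivative[OF bounded_linear_Re 2] .
  show ?thesis using 3 by (simp add: has_real_derivative_iff_has_vector_derivative mult.commute)
qed


lemma cmod_of_real_diff[simp]: "cmod (complex_of_real a - complex_of_real b) = \<bar>a - b\<bar>"
  by (metis norm_of_real of_real_diff)

lemma extension:
  fixes f :: "real \<Rightarrow> real"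
  assumes S0: "open S0" "{-1..0} \<subseteq> S0" and an: "real_analytic_on f S0"
  obtains S F where "open S" "F holomorphic_on S"
    "\<And>t. t \<in> {-1..0} \<Longrightarrow> complex_of_real t \<in> S"
    "\<And>z. z \<in> S \<Longrightarrow> cnj z \<in> S \<and> F (cnj z) = cnj (F z)"
    "\<And>t. complex_of_real t \<in> S \<Longrightarrow> F (complex_of_real t) = complex_of_real (f t)"
proof -
  have "\<forall>x\<in>{-1..0::real}. \<exists>r>0. \<exists>a::nat \<Rightarrow> real.
        \<forall>y. \<bar>y - x\<bar> < r \<longrightarrow> (\<lambda>n. a n * (y - x) ^ n) sums f y"
    using an S0 unfolding real_analytic_on_def by blast
  then obtain r a where ra: "\<And>x. x\<in>{-1..0::real} \<Longrightarrow> r x > 0 \<and>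
        (\<forall>y. \<bar>y - x\<bar> < r x \<longrightarrow> (\<lambda>n. a x n * (y - x) ^ n) sums f y)"
    by metis
  define P where "P x z = (\<Sum>n. complex_of_real (a x n) * (z - complex_of_real x) ^ n)" for x z
  define B where "B x = ball (complex_of_real x) (r x)" for x
  have sreal: "(\<lambda>n. complex_of_real (a x n) * (complex_of_real y - complex_of_real x) ^ n) sums complex_of_real (f y)"
    if "x \<in> {-1..0}" "\<bar>y - x\<bar> < r x" for x y
  proof -
    have "(\<lambda>n. a x n * (y - x) ^ n) sums f y" using ra that by blast
    from sums_of_real[OF this, where 'a=complex] show ?thesis by simp
  qed
  have Preal: "P x (complex_of_real y) = complex_of_real (f y)"
    if "x \<in> {-1..0}" "\<bar>y - x\<bar> < r x" for x y
    unfolding P_def using sums_unique[OF sreal[OF that]] by simp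
  have conv: "summable (\<lambda>n. complex_of_real (a x n) * (z - complex_of_real x) ^ n) \<and>
      (P x has_field_derivative (\<Sum>n. diffs (\<lambda>n. complex_of_real (a x n)) n * (z - complex_of_real x)^n)) (at z)"
    if x: "x \<in> {-1..0}" and z: "z \<in> B x" for x z
  proof -
    define K where "K = (cmod (z - complex_of_real x) + r x) / 2"
    have zr: "cmod (z - complex_of_real x) < r x" using z by (simp add: B_def dist_norm norm_minus_commute)
    have n0: "0 \<le> cmod (z - complex_of_real x)" by simp
    have K1: "cmod (z - complex_of_real x) < K" using zr n0 unfolding K_def by (simp add: field_simps)
    have K2: "K < r x" using zr n0 unfolding K_def by (simp add: field_simps)
    have rx: "0 < r x" using ra[OF x] by blast
    have K3: "0 < K" using add_nonneg_pos[OF n0 rx] unfolding K_def by simp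
    note K = K1 K2 K3
    have "summable (\<lambda>n. complex_of_real (a x n) * (complex_of_real (x + K) - complex_of_real x) ^ n)"
      using sreal[OF x, of "x + K"] K by (auto simp: sums_iff)
    then have sm: "summable (\<lambda>n. complex_of_real (a x n) * (complex_of_real K) ^ n)" by simp
    have nK: "norm (z - complex_of_real x) < norm (complex_of_real K)" using K by simp
    have s1: "summable (\<lambda>n. complex_of_real (a x n) * (z - complex_of_real x) ^ n)"
      by (rule powser_inside[OF sm nK])
    have d: "DERIV (\<lambda>u. \<Sum>n. complex_of_real (a x n) * u ^ n) (z - complex_of_real x) :>
       (\<Sum>n. diffs (\<lambda>n. complex_of_real (a x n)) n * (z - complex_of_real x)^n)"
      by (rule termdiffs_strong[OF sm nK])
    have d2: "((\<lambda>z. z - complex_of_real x) has_field_derivative 1) (at z)"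
      by (auto intro!: derivative_eq_intros)
    have "((\<lambda>z. \<Sum>n. complex_of_real (a x n) * (z - complex_of_real x) ^ n) has_field_derivative
       (\<Sum>n. diffs (\<lambda>n. complex_of_real (a x n)) n * (z - complex_of_real x)^n) * 1) (at z)"
      using DERIV_chain2[OF d d2] .
    then show ?thesis using s1 by (simp add: P_def[abs_def])
  qed
  have Pcnj: "P x (cnj z) = cnj (P x z)" if x: "x \<in> {-1..0}" and z: "z \<in> B x" for x z
  proof -
    have "(\<lambda>n. complex_of_real (a x n) * (z - complex_of_real x) ^ n) sums P x z"
      using conv[OF x z] by (simp add: P_def summable_sums)
    then have "(\<lambda>n. cnj (complex_of_real (a x n) * (z - complex_of_real x) ^ n)) sums cnj (P x z)"
      by (simp only: sums_cnj)
    then have "(\<lambda>n. complex_of_real (a x n) * (cnj z - complex_of_real x) ^ n) sums cnj (P x z)"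
      by simp
    then show ?thesis unfolding P_def by (simp add: sums_iff)
  qed
  have Bcnj: "cnj z \<in> B x" if "z \<in> B x" for x z
  proof -
    have "cmod (complex_of_real x - cnj z) = cmod (cnj (complex_of_real x - z))" by simp
    also have "\<dots> = cmod (complex_of_real x - z)" by (simp only: complex_mod_cnj)
    finally show ?thesis using that by (simp add: B_def dist_norm)
  qed
  have hol: "P x holomorphic_on B x" if "x \<in> {-1..0}" for x
    unfolding holomorphic_on_open[OF open_ball, of _ "complex_of_real x" "r x", folded B_def]
    using conv[OF that] by blast
  have agree: "P x z = P x' z" if x: "x \<in> {-1..0}" and x': "x' \<in> {-1..0}"
      and z: "z \<in> B x" "z \<in> B x'" for x x' z
  proof -
    define I where "I = B x \<inter> B x'"
    define \<xi> where "\<xi> = complex_of_real (Re z)"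
    have oI: "open I" unfolding I_def B_def by auto
    have cI: "connected I" unfolding I_def B_def
      by (intro convex_connected convex_Int convex_ball)
    have xiB: "\<xi> \<in> B y" if "z \<in> B y" for y
    proof -
      have "\<bar>Re (complex_of_real y - z)\<bar> \<le> cmod (complex_of_real y - z)" by (rule abs_Re_le_cmod)
      moreover have "cmod (complex_of_real y - complex_of_real (Re z)) = \<bar>y - Re z\<bar>"
        by (metis norm_of_real of_real_diff)
      ultimately show ?thesis using that by (simp add: B_def \<xi>_def dist_norm)
    qed
    have xi: "\<xi> \<in> I" using xiB z unfolding I_def by auto
    then obtain \<delta> where \<delta>: "\<delta> > 0" "ball \<xi> \<delta> \<subseteq> I" using oI open_contains_ball by blast
    define R where "R = I \<inter> \<real>"
    have lim: "\<xi> islimpt R"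
      unfolding islimpt_approachable
    proof (intro allI impI)
      fix e :: real assume e: "e > 0"
      define x1 where "x1 = \<xi> + complex_of_real (min e \<delta> / 2)"
      have "dist x1 \<xi> = min e \<delta> / 2" using e \<delta> by (simp add: x1_def dist_norm)
      moreover have "x1 \<in> ball \<xi> \<delta>" using e \<delta> calculation by (simp add: dist_commute)
      moreover have "x1 \<in> \<real>" by (simp add: x1_def \<xi>_def)
      ultimately show "\<exists>x'\<in>R. x' \<noteq> \<xi> \<and> dist x' \<xi> < e" using e \<delta>
        by (intro bexI[of _ x1]) (auto simp: R_def)
    qed
    have zero: "P x w - P x' w = 0" if w: "w \<in> R" for w
    proof -
      obtain t where t: "w = complex_of_real t" using w by (auto simp: R_def elim!: Reals_cases)
      have "w \<in> B x" "w \<in> B x'" using w by (auto simp: R_def I_def)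
      then have "\<bar>t - x\<bar> < r x" "\<bar>t - x'\<bar> < r x'"
        by (auto simp: B_def t dist_norm abs_minus_commute)
      then show ?thesis using Preal x x' t by simp
    qed
    have "P x z - P x' z = 0"
      by (rule analytic_continuation[of "\<lambda>w. P x w - P x' w" I R \<xi>])
         (use hol[OF x] hol[OF x'] oI cI xi lim zero z in
           \<open>auto simp: I_def R_def intro!: holomorphic_intros elim: holomorphic_on_subset\<close>)
    then show ?thesis by simp
  qed
  define S where "S = (\<Union>x\<in>{-1..0}. B x)"
  define F where "F z = P (SOME x. x \<in> {-1..0} \<and> z \<in> B x) z" for z
  have Feq: "F z = P x z" if x: "x \<in> {-1..0}" and z: "z \<in> B x" for x z
  proof -
    have "\<exists>x. x \<in> {-1..0} \<and> z \<in> B x" using x z by blast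
    then have "(SOME x. x \<in> {-1..0} \<and> z \<in> B x) \<in> {-1..0} \<and> z \<in> B (SOME x. x \<in> {-1..0} \<and> z \<in> B x)"
      by (rule someI_ex)
    then show ?thesis unfolding F_def using agree x z by blast
  qed
  show ?thesis
  proof
    show "open S" unfolding S_def B_def by auto
    show "F holomorphic_on S"
      unfolding holomorphic_on_open[OF \<open>open S\<close>]
    proof
      fix z assume "z \<in> S"
      then obtain x where x: "x \<in> {-1..0}" and z: "z \<in> B x" unfolding S_def by blast
      have "(F has_field_derivative (\<Sum>n. diffs (\<lambda>n. complex_of_real (a x n)) n * (z - complex_of_real x)^n)) (at z)"
        by (rule has_field_derivative_transform_within_open[OF conjunct2[OF conv[OF x z]], of "B x"])
           (use z Feq[OF x] in \<open>auto simp: B_def\<close>)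
      then show "\<exists>f'. (F has_field_derivative f') (at z)" by blast
    qed
    show "complex_of_real t \<in> S" if "t \<in> {-1..0}" for t
      using that ra[OF that] unfolding S_def B_def by force
    show "cnj z \<in> S \<and> F (cnj z) = cnj (F z)" if "z \<in> S" for z
    proof -
      obtain x where x: "x \<in> {-1..0}" and z: "z \<in> B x" using \<open>z \<in> S\<close> unfolding S_def by blast
      show ?thesis using Feq[OF x z] Feq[OF x Bcnj[OF z]] Pcnj[OF x z] Bcnj[OF z] x
        unfolding S_def by auto
    qed
    show "F (complex_of_real t) = complex_of_real (f t)" if ts: "complex_of_real t \<in> S" for t
    proof -
      obtain x where x: "x \<in> {-1..0}" and z: "complex_of_real t \<in> B x" using ts unfolding S_def by blast
      then have "\<bar>t - x\<bar> < r x" by (auto simp: B_def dist_norm abs_minus_commute)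
      then show ?thesis using Feq[OF x z] Preal[OF x] by simp
    qed
  qed
qed


definition gk :: "(complex \<Rightarrow> complex) \<Rightarrow> nat \<Rightarrow> complex \<Rightarrow> complex" where
  "gk F k = (deriv ^^ k) F"

definition Vf :: "(complex \<Rightarrow> complex) \<Rightarrow> complex \<Rightarrow> nat \<Rightarrow> real \<times> real \<Rightarrow> real" where
  "Vf F c k p = Re (c * gk F k ((Complex (fst p) (snd p) - 1) / 2))"

definition fd :: "(complex \<Rightarrow> complex) \<Rightarrow> nat \<Rightarrow> real \<Rightarrow> real" where
  "fd F k t = Re (gk F k (complex_of_real t))"

definition Ef :: "(complex \<Rightarrow> complex) \<Rightarrow> real \<Rightarrow> real \<Rightarrow> nat \<Rightarrow> real \<times> real \<Rightarrow> real" where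
  "Ef F c1 c2 k p = c1 * fd F k ((fst p - snd p - 1) / 2) + c2 * fd F k ((fst p + snd p - 1) / 2)"

lemma gk_hol: "F holomorphic_on S \<Longrightarrow> open S \<Longrightarrow> gk F k holomorphic_on S"
  unfolding gk_def by (rule holomorphic_higher_deriv)

lemma gk_der: assumes "F holomorphic_on S" "open S" "z \<in> S"
  shows "(gk F k has_field_derivative gk F (Suc k) z) (at z)"
proof -
  have "gk F (Suc k) = deriv (gk F k)" by (simp add: gk_def)
  then show ?thesis using holomorphic_derivI[OF gk_hol[OF assms(1,2)] assms(2,3)] by simp
qed

lemma Vx: assumes "F holomorphic_on S" "open S" "(Complex x y - 1) / 2 \<in> S" "c' = c / 2"
  shows "((\<lambda>t. Vf F c k (t, y)) has_real_derivative Vf F c' (Suc k) (x, y)) (at x)"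
proof -
  define d where "d = (Complex 0 y - 1) / 2"
  have e: "\<And>t. (Complex t y - 1) / 2 = (1/2) * complex_of_real t + d"
    by (simp add: d_def complex_eq_iff)
  have "((\<lambda>z. c * gk F k z) has_field_derivative c * gk F (Suc k) ((1/2) * complex_of_real x + d)) (at ((1/2) * complex_of_real x + d))"
    using gk_der[OF assms(1,2), of "(1/2) * complex_of_real x + d" k] assms(3) e[of x]
    by (auto intro!: derivative_eq_intros)
  from Re_aff[OF this] show ?thesis
    unfolding Vf_def by (simp add: e assms(4) algebra_simps)
qed

lemma Vy: assumes "F holomorphic_on S" "open S" "(Complex x y - 1) / 2 \<in> S" "c' = c * \<i> / 2"
  shows "((\<lambda>t. Vf F c k (x, t)) has_real_derivative Vf F c' (Suc k) (x, y)) (at y)"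
proof -
  define d where "d = (complex_of_real x - 1) / 2"
  have e: "\<And>t. (Complex x t - 1) / 2 = (\<i>/2) * complex_of_real t + d"
    by (simp add: d_def complex_eq_iff)
  have "((\<lambda>z. c * gk F k z) has_field_derivative c * gk F (Suc k) ((\<i>/2) * complex_of_real y + d)) (at ((\<i>/2) * complex_of_real y + d))"
    using gk_der[OF assms(1,2), of "(\<i>/2) * complex_of_real y + d" k] assms(3) e[of y]
    by (auto intro!: derivative_eq_intros)
  from Re_aff[OF this] show ?thesis
    unfolding Vf_def by (simp add: e assms(4) algebra_simps)
qed

lemma Vcont: assumes "F holomorphic_on S" "open S" "\<And>p. p \<in> A \<Longrightarrow> (Complex (fst p) (snd p) - 1) / 2 \<in> S"
  shows "continuous_on A (Vf F c k)"
proof -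
  have h: "continuous_on S (gk F k)" using gk_hol[OF assms(1,2)] holomorphic_on_imp_continuous_on by blast
  have c1: "continuous_on A (\<lambda>p. (Complex (fst p) (snd p) - 1) / 2)"
    by (intro continuous_intros) auto
  have "continuous_on A (\<lambda>p. gk F k ((Complex (fst p) (snd p) - 1) / 2))"
    by (rule continuous_on_compose2[OF h c1]) (use assms(3) in auto)
  then show ?thesis unfolding Vf_def[abs_def] by (intro continuous_intros)
qed

lemma fd_der: assumes "F holomorphic_on S" "open S" "complex_of_real t \<in> S"
  shows "(fd F k has_real_derivative fd F (Suc k) t) (at t)"
proof -
  have "(gk F k has_field_derivative gk F (Suc k) (1 * complex_of_real t + 0)) (at (1 * complex_of_real t + 0))"
    using gk_der[OF assms(1,2,3)] by simp
  from Re_aff[OF this] show ?thesis unfolding fd_def[abs_def] by simp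
qed

lemma Ex: assumes "F holomorphic_on S" "open S"
    "complex_of_real ((x - y - 1) / 2) \<in> S" "complex_of_real ((x + y - 1) / 2) \<in> S"
    "c1' = c1 / 2" "c2' = c2 / 2"
  shows "((\<lambda>t. Ef F c1 c2 k (t, y)) has_real_derivative Ef F c1' c2' (Suc k) (x, y)) (at x)"
proof -
  have a: "((\<lambda>t. (t - y - 1)/2) has_real_derivative 1/2) (at x)" by (auto intro!: derivative_eq_intros)
  have b: "((\<lambda>t. (t + y - 1)/2) has_real_derivative 1/2) (at x)" by (auto intro!: derivative_eq_intros)
  have da: "((\<lambda>t. fd F k ((t - y - 1)/2)) has_real_derivative fd F (Suc k) ((x-y-1)/2) * (1/2)) (at x)"
    by (rule DERIV_chain2[OF fd_der[OF assms(1,2,3)] a])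
  have db: "((\<lambda>t. fd F k ((t + y - 1)/2)) has_real_derivative fd F (Suc k) ((x+y-1)/2) * (1/2)) (at x)"
    by (rule DERIV_chain2[OF fd_der[OF assms(1,2,4)] b])
  have "((\<lambda>t. c1 * fd F k ((t - y - 1)/2) + c2 * fd F k ((t + y - 1)/2)) has_real_derivative
     c1 * (fd F (Suc k) ((x-y-1)/2) * (1/2)) + c2 * (fd F (Suc k) ((x+y-1)/2) * (1/2))) (at x)"
    by (intro DERIV_add DERIV_cmult da db)
  then show ?thesis by (simp add: Ef_def assms algebra_simps)
qed

lemma Ey: assumes "F holomorphic_on S" "open S"
    "complex_of_real ((x - y - 1) / 2) \<in> S" "complex_of_real ((x + y - 1) / 2) \<in> S"
    "c1' = - c1 / 2" "c2' = c2 / 2"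
  shows "((\<lambda>t. Ef F c1 c2 k (x, t)) has_real_derivative Ef F c1' c2' (Suc k) (x, y)) (at y)"
proof -
  have a: "((\<lambda>t. (x - t - 1)/2) has_real_derivative -1/2) (at y)" by (auto intro!: derivative_eq_intros)
  have b: "((\<lambda>t. (x + t - 1)/2) has_real_derivative 1/2) (at y)" by (auto intro!: derivative_eq_intros)
  have da: "((\<lambda>t. fd F k ((x - t - 1)/2)) has_real_derivative fd F (Suc k) ((x-y-1)/2) * (-1/2)) (at y)"
    by (rule DERIV_chain2[OF fd_der[OF assms(1,2,3)] a])
  have db: "((\<lambda>t. fd F k ((x + t - 1)/2)) has_real_derivative fd F (Suc k) ((x+y-1)/2) * (1/2)) (at y)"
    by (rule DERIV_chain2[OF fd_der[OF assms(1,2,4)] b])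
  have "((\<lambda>t. c1 * fd F k ((x - t - 1)/2) + c2 * fd F k ((x + t - 1)/2)) has_real_derivative
     c1 * (fd F (Suc k) ((x-y-1)/2) * (-1/2)) + c2 * (fd F (Suc k) ((x+y-1)/2) * (1/2))) (at y)"
    by (intro DERIV_add DERIV_cmult da db)
  then show ?thesis by (simp add: Ef_def assms algebra_simps)
qed

lemma Econt: assumes "F holomorphic_on S" "open S"
    "\<And>p. p \<in> A \<Longrightarrow> complex_of_real ((fst p - snd p - 1) / 2) \<in> S \<and> complex_of_real ((fst p + snd p - 1) / 2) \<in> S"
  shows "continuous_on A (Ef F c1 c2 k)"
proof -
  have h: "continuous_on S (gk F k)" using gk_hol[OF assms(1,2)] holomorphic_on_imp_continuous_on by blast
  have 1: "continuous_on A (\<lambda>p. gk F k (complex_of_real ((fst p - snd p - 1) / 2)))"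
    by (rule continuous_on_compose2[OF h]) (use assms(3) in \<open>auto intro!: continuous_intros\<close>)
  have 2: "continuous_on A (\<lambda>p. gk F k (complex_of_real ((fst p + snd p - 1) / 2)))"
    by (rule continuous_on_compose2[OF h]) (use assms(3) in \<open>auto intro!: continuous_intros\<close>)
  show ?thesis unfolding Ef_def[abs_def] fd_def using 1 2 by (intro continuous_intros)
qed

lemma pdx_at:
  assumes "open A" "(x, y) \<in> A" "\<And>q. q \<in> A \<Longrightarrow> \<Phi> q = \<Psi> q"
    "((\<lambda>t. \<Psi> (t, y)) has_real_derivative L) (at x)"
  shows "((\<lambda>t. \<Phi> (t, y)) has_real_derivative L) (at x)" "pdx \<Phi> (x, y) = L"
proof -
  have o: "open ((\<lambda>t. (t, y)) -` A)" by (rule open_vimage[OF assms(1)]) (intro continuous_intros)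
  show d: "((\<lambda>t. \<Phi> (t, y)) has_real_derivative L) (at x)"
    by (rule has_field_derivative_transform_within_open[OF assms(4) o]) (use assms(2,3) in auto)
  show "pdx \<Phi> (x, y) = L" unfolding pdx_def using DERIV_imp_deriv[OF d] by simp
qed

lemma pdy_at:
  assumes "open A" "(x, y) \<in> A" "\<And>q. q \<in> A \<Longrightarrow> \<Phi> q = \<Psi> q"
    "((\<lambda>t. \<Psi> (x, t)) has_real_derivative L) (at y)"
  shows "((\<lambda>t. \<Phi> (x, t)) has_real_derivative L) (at y)" "pdy \<Phi> (x, y) = L"
proof -
  have o: "open ((\<lambda>t. (x, t)) -` A)" by (rule open_vimage[OF assms(1)]) (intro continuous_intros)
  show d: "((\<lambda>t. \<Phi> (x, t)) has_real_derivative L) (at y)"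
    by (rule has_field_derivative_transform_within_open[OF assms(4) o]) (use assms(2,3) in auto)
  show "pdy \<Phi> (x, y) = L" unfolding pdy_def using DERIV_imp_deriv[OF d] by simp
qed


lemma der_diff: "(f has_real_derivative L) (at x) \<Longrightarrow> f differentiable (at x)"
  by (metis differentiableI has_field_derivative_imp_has_derivative)

lemma C1_intro:
  assumes "\<And>x y. (x, y) \<in> D \<Longrightarrow> ((\<lambda>t. U (t, y)) has_real_derivative Ux (x, y)) (at x) \<and> pdx U (x, y) = Ux (x, y)"
    and "\<And>x y. (x, y) \<in> D \<Longrightarrow> ((\<lambda>t. U (x, t)) has_real_derivative Uy (x, y)) (at y) \<and> pdy U (x, y) = Uy (x, y)"
    and "continuous_on D U" "continuous_on D Ux" "continuous_on D Uy"
  shows "C1_on D U"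
  unfolding C1_on_def
proof (intro conjI)
  show "continuous_on D U" by fact
  show "\<forall>(x, y)\<in>D. (\<lambda>t. U (t, y)) differentiable at x \<and> (\<lambda>t. U (x, t)) differentiable at y"
  proof (clarify)
    fix x y assume xy: "(x, y) \<in> D"
    show "(\<lambda>t. U (t, y)) differentiable at x \<and> (\<lambda>t. U (x, t)) differentiable at y"
      using der_diff assms(1)[OF xy] assms(2)[OF xy] by blast
  qed
  show "continuous_on D (pdx U)"
    by (rule continuous_on_eq[OF assms(4)]) (use assms(1) in auto)
  show "continuous_on D (pdy U)"
    by (rule continuous_on_eq[OF assms(5)]) (use assms(2) in auto)
qed




theorem mainTheorem2:
  fixes f :: "real \<Rightarrow> real"
  assumes analytic: "\<exists>S. open S \<and> {-1..0} \<subseteq> S \<and> real_analytic_on f S"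
    and f_m1: "f (-1) = 0"
    and f_deriv: "\<forall>x\<in>{-1..0::real}. deriv f x < 0"
  shows "\<exists>(D1 :: (real \<times> real) set) (U :: real \<times> real \<Rightarrow> real).
     open D1 \<and> D1 \<subseteq> {p. snd p > 0} \<and>
     (let D = D1 \<union> {(x, 0) | x. -1 < x \<and> x < 1} \<union> D2 in
        open D \<and> connected D \<and> C1_on D U) \<and>
     C2_on D1 U \<and> C2_on D2 U \<and>
     (\<forall>p\<in>D1 \<union> D2. pdx (pdx U) p + sgn (U p) * pdy (pdy U) p = 0) \<and>
     (\<forall>p\<in>D1. U p > 0) \<and> (\<forall>p\<in>D2. U p < 0) \<and>
     (\<forall>x\<in>{-1..0}. U (x, - x - 1) = f x) \<and>
     (\<forall>(x, y)\<in>D2. U (x, y) = f ((x - y - 1) / 2) - f ((x + y - 1) / 2)) \<and>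
     (\<exists>S F. open S \<and> F holomorphic_on S \<and>
        (\<forall>x\<in>{-1..0::real}. complex_of_real x \<in> S \<and> F (complex_of_real x) = complex_of_real (f x)) \<and>
        (\<forall>(x, y)\<in>D1. (Complex x y - 1) / 2 \<in> S \<and> (cnj (Complex x y) - 1) / 2 \<in> S \<and>
           complex_of_real (U (x, y)) = \<i> * (F ((Complex x y - 1) / 2) - F ((cnj (Complex x y) - 1) / 2))))"
proof -
  obtain S0 where S0: "open S0" "{-1..0} \<subseteq> S0" "real_analytic_on f S0" using analytic by blast
  obtain S F where oS: "open S" and hF: "F holomorphic_on S"
    and Sre: "\<And>t. t \<in> {-1..0} \<Longrightarrow> complex_of_real t \<in> S"
    and Scnj: "\<And>z. z \<in> S \<Longrightarrow> cnj z \<in> S \<and> F (cnj z) = cnj (F z)"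
    and Fre: "\<And>t. complex_of_real t \<in> S \<Longrightarrow> F (complex_of_real t) = complex_of_real (f t)"
    by (rule extension[OF S0]) blast
  have g0: "gk F 0 = F" by (simp add: gk_def)
  define R where "R = complex_of_real -` S"
  have oR: "open R" unfolding R_def by (rule open_vimage[OF oS]) (intro continuous_intros)
  have inR: "t \<in> R \<longleftrightarrow> complex_of_real t \<in> S" for t by (simp add: R_def)
  have IR: "{-1..0} \<subseteq> R" using Sre inR by blast
  have fR: "f t = fd F 0 t" if "t \<in> R" for t
    using Fre[of t] that by (simp add: fd_def g0 inR)
  have Im0: "Im (gk F k (complex_of_real t)) = 0" if "t \<in> R" for k t
    using that
  proof (induction k arbitrary: t)
    case 0
    then show ?case using Fre[of t] by (simp add: g0 inR)
  next
    case (Suc k)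
    have "(gk F k has_field_derivative gk F (Suc k) (1 * complex_of_real t + 0)) (at (1 * complex_of_real t + 0))"
      using gk_der[OF hF oS, of "complex_of_real t" k] Suc.prems by (simp add: inR)
    then have "((\<lambda>z. - \<i> * gk F k z) has_field_derivative - \<i> * gk F (Suc k) (1 * complex_of_real t + 0)) (at (1 * complex_of_real t + 0))"
      by (auto intro!: derivative_eq_intros)
    from Re_aff[OF this] have d1: "((\<lambda>s. Im (gk F k (complex_of_real s))) has_real_derivative Im (gk F (Suc k) (complex_of_real t))) (at t)"
      by simp
    have d2: "((\<lambda>s. Im (gk F k (complex_of_real s))) has_real_derivative 0) (at t)"
      by (rule has_field_derivative_transform_within_open[of "\<lambda>s. 0" 0 t R]) (use Suc oR in auto)
    show ?case using DERIV_unique[OF d1 d2] .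
  qed
  have fder: "(f has_real_derivative fd F (Suc 0) t) (at t)" if "t \<in> R" for t
    by (rule has_field_derivative_transform_within_open[OF fd_der[OF hF oS] oR that])
       (use that fR in \<open>auto simp: inR\<close>)
  have fneg: "fd F (Suc 0) t < 0" if "t \<in> {-1..0}" for t
  proof -
    have "t \<in> R" using IR that by blast
    then have "deriv f t = fd F (Suc 0) t" using DERIV_imp_deriv[OF fder] by blast
    moreover have "deriv f t < 0" using f_deriv that by blast
    ultimately show ?thesis by simp
  qed
  define T where "T = S \<inter> (\<lambda>z. Re (gk F (Suc 0) z)) -` {..<0}"
  have oT: "open T" unfolding T_def
    by (rule continuous_open_preimage[OF _ oS open_lessThan])
       (use holomorphic_on_imp_continuous_on[OF gk_hol[OF hF oS]] in \<open>intro continuous_intros\<close>)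
  have TS: "T \<subseteq> S" unfolding T_def by blast
  have KT: "complex_of_real ` {-1..0} \<subseteq> T"
    using Sre fneg by (auto simp: T_def fd_def)
  have cK: "compact (complex_of_real ` {-1..0})"
    by (rule compact_continuous_image) (auto intro!: continuous_intros)
  obtain \<epsilon> where \<epsilon>: "\<epsilon> > 0" "(\<Union>x\<in>complex_of_real ` {-1..0}. ball x \<epsilon>) \<subseteq> T"
    using compact_subset_open_imp_ball_epsilon_subset[OF cK oT KT] by blast
  have ballT: "complex_of_real p + \<i> * complex_of_real s \<in> T" if "p \<in> {-1..0}" "\<bar>s\<bar> < \<epsilon>" for p s
  proof -
    have "dist (complex_of_real p) (complex_of_real p + \<i> * complex_of_real s) = \<bar>s\<bar>"
      by (simp add: dist_norm norm_mult)
    then show ?thesis using \<epsilon>(2) that by force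
  qed
  have wform: "(Complex x y - 1) / 2 = complex_of_real ((x - 1) / 2) + \<i> * complex_of_real (y / 2)" for x y
    by (simp add: complex_eq_iff)
  have WT: "(Complex x y - 1) / 2 \<in> T" if "-1 < x" "x < 1" "\<bar>y\<bar> < 2 * \<epsilon>" for x y
    unfolding wform by (rule ballT) (use that in auto)
  define D1 where "D1 = {p::real\<times>real. -1 < fst p \<and> fst p < 1 \<and> 0 < snd p \<and> snd p < 2*\<epsilon>}"
  define U where "U = (\<lambda>p::real\<times>real. if snd p > 0 then Re (2*\<i> * F ((Complex (fst p) (snd p) - 1)/2))
                    else f ((fst p - snd p - 1)/2) - f ((fst p + snd p - 1)/2))"
  define Dup where "Dup = {p::real\<times>real. -1 < fst p \<and> fst p < 1 \<and> 0 \<le> snd p \<and> snd p < 2*\<epsilon>}"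
  define Ddn where "Ddn = {p::real\<times>real. snd p \<le> 0 \<and> snd p > - fst p - 1 \<and> snd p > fst p - 1}"
  define Dall where "Dall = D1 \<union> {(x, 0) | x. -1 < x \<and> x < 1} \<union> D2"
  have memD1: "(x, y) \<in> D1 \<longleftrightarrow> -1 < x \<and> x < 1 \<and> 0 < y \<and> y < 2*\<epsilon>" for x y by (simp add: D1_def)
  have memD2: "(x, y) \<in> D2 \<longleftrightarrow> y < 0 \<and> y > -x-1 \<and> y > x-1" for x y by (simp add: D2_def)
  have memDall: "(x, y) \<in> Dall \<longleftrightarrow> -1 < x \<and> x < 1 \<and> y < 2*\<epsilon> \<and> - x - y < 1 \<and> x - y < 1" for x y
    using \<epsilon>(1) by (auto simp: Dall_def memD1 memD2)
  have memDup: "(x, y) \<in> Dup \<longleftrightarrow> -1 < x \<and> x < 1 \<and> 0 \<le> y \<and> y < 2*\<epsilon>" for x y by (simp add: Dup_def)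
  have memDdn: "(x, y) \<in> Ddn \<longleftrightarrow> y \<le> 0 \<and> y > -x-1 \<and> y > x-1" for x y by (simp add: Ddn_def)
  have Dall_eq: "Dall = Dup \<union> Ddn"
  proof (rule set_eqI)
    fix p :: "real \<times> real" show "p \<in> Dall \<longleftrightarrow> p \<in> Dup \<union> Ddn"
      using \<epsilon>(1) by (cases p) (auto simp: memDall memDup memDdn)
  qed
  have D1up: "D1 \<subseteq> Dup" by (auto simp: D1_def Dup_def)
  have D2dn: "D2 \<subseteq> Ddn" by (auto simp: D2_def Ddn_def)
  have oD1: "open D1" unfolding D1_def
    by (intro open_Collect_conj open_Collect_less continuous_intros)
  have D2eq: "D2 = {p. snd p < 0 \<and> - fst p - 1 < snd p \<and> fst p - 1 < snd p}" by (auto simp: D2_def)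
  have oD2: "open D2" unfolding D2eq
    by (intro open_Collect_conj open_Collect_less continuous_intros)
  have Dall_H: "Dall = {p. inner (-1::real, 0::real) p < 1} \<inter> {p. inner (1::real, 0::real) p < 1}
      \<inter> {p. inner (0::real, 1::real) p < 2*\<epsilon>} \<inter> {p. inner (-1::real, -1::real) p < 1} \<inter> {p. inner (1::real, -1::real) p < 1}"
  proof (rule set_eqI)
    fix p :: "real \<times> real" show "p \<in> Dall \<longleftrightarrow> p \<in> {p. inner (-1::real, 0::real) p < 1} \<inter> {p. inner (1::real, 0::real) p < 1}
      \<inter> {p. inner (0::real, 1::real) p < 2*\<epsilon>} \<inter> {p. inner (-1::real, -1::real) p < 1} \<inter> {p. inner (1::real, -1::real) p < 1}"
      by (cases p) (auto simp: memDall)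
  qed
  have oDall: "open Dall" unfolding Dall_H by (intro open_Int open_halfspace_lt)
  have cDall: "connected Dall" unfolding Dall_H
    by (intro convex_connected convex_Int convex_halfspace_lt)
  have inS_up: "(Complex (fst p) (snd p) - 1)/2 \<in> S" if "p \<in> Dup" for p
    using WT[of "fst p" "snd p"] TS that by (auto simp: Dup_def)
  have inR_dn: "(fst p - snd p - 1)/2 \<in> R \<and> (fst p + snd p - 1)/2 \<in> R" if "p \<in> Ddn" for p
  proof -
    have "(fst p - snd p - 1)/2 \<in> {-1..0}" "(fst p + snd p - 1)/2 \<in> {-1..0}" using that by (auto simp: Ddn_def)
    then show ?thesis using IR by blast
  qed
  have inS_dn: "complex_of_real ((fst p - snd p - 1)/2) \<in> S \<and> complex_of_real ((fst p + snd p - 1)/2) \<in> S"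
    if "p \<in> Ddn" for p using inR_dn[OF that] by (simp add: inR)
  have U_up: "U p = Vf F (2*\<i>) 0 p" if "snd p > 0" for p
    using that by (simp add: U_def Vf_def g0)
  have U_dn: "U p = Ef F 1 (-1) 0 p" if "p \<in> Ddn" for p
    using that inR_dn[OF that] by (simp add: U_def Ddn_def Ef_def fR)
  have eqU1: "U q = Vf F (2*\<i>) 0 q" if "q \<in> D1" for q using that U_up by (auto simp: D1_def)
  have eqU2: "U q = Ef F 1 (-1) 0 q" if "q \<in> D2" for q using that U_dn D2dn by blast
  have wS1: "(Complex x y - 1)/2 \<in> S" if "(x, y) \<in> D1" for x y using inS_up[of "(x,y)"] D1up that by auto
  have aS2: "complex_of_real ((x - y - 1)/2) \<in> S" "complex_of_real ((x + y - 1)/2) \<in> S" if "(x, y) \<in> D2" for x y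
    using inS_dn[of "(x,y)"] D2dn that by auto
  have d1x: "((\<lambda>t. U (t, y)) has_real_derivative Vf F \<i> (Suc 0) (x, y)) (at x) \<and> pdx U (x, y) = Vf F \<i> (Suc 0) (x, y)"
    if xy: "(x, y) \<in> D1" for x y
  proof -
    have d: "((\<lambda>t. Vf F (2*\<i>) 0 (t, y)) has_real_derivative Vf F \<i> (Suc 0) (x, y)) (at x)"
      by (rule Vx[OF hF oS wS1[OF xy]]) simp
    show ?thesis using pdx_at[OF oD1 xy eqU1 d] by blast
  qed
  have d1y: "((\<lambda>t. U (x, t)) has_real_derivative Vf F (-1) (Suc 0) (x, y)) (at y) \<and> pdy U (x, y) = Vf F (-1) (Suc 0) (x, y)"
    if xy: "(x, y) \<in> D1" for x y
  proof -
    have d: "((\<lambda>t. Vf F (2*\<i>) 0 (x, t)) has_real_derivative Vf F (-1) (Suc 0) (x, y)) (at y)"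
      by (rule Vy[OF hF oS wS1[OF xy]]) simp
    show ?thesis using pdy_at[OF oD1 xy eqU1 d] by blast
  qed
  have eqPx1: "pdx U q = Vf F \<i> (Suc 0) q" if "q \<in> D1" for q using d1x[of "fst q" "snd q"] that by simp
  have eqPy1: "pdy U q = Vf F (-1) (Suc 0) q" if "q \<in> D1" for q using d1y[of "fst q" "snd q"] that by simp
  have d1xx: "((\<lambda>t. pdx U (t, y)) has_real_derivative Vf F (\<i>/2) (Suc (Suc 0)) (x, y)) (at x) \<and> pdx (pdx U) (x, y) = Vf F (\<i>/2) (Suc (Suc 0)) (x, y)"
    if xy: "(x, y) \<in> D1" for x y
  proof -
    have d: "((\<lambda>t. Vf F \<i> (Suc 0) (t, y)) has_real_derivative Vf F (\<i>/2) (Suc (Suc 0)) (x, y)) (at x)"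
      by (rule Vx[OF hF oS wS1[OF xy]]) simp
    show ?thesis using pdx_at[OF oD1 xy eqPx1 d] by blast
  qed
  have d1yx: "((\<lambda>t. pdx U (x, t)) has_real_derivative Vf F (-1/2) (Suc (Suc 0)) (x, y)) (at y) \<and> pdy (pdx U) (x, y) = Vf F (-1/2) (Suc (Suc 0)) (x, y)"
    if xy: "(x, y) \<in> D1" for x y
  proof -
    have d: "((\<lambda>t. Vf F \<i> (Suc 0) (x, t)) has_real_derivative Vf F (-1/2) (Suc (Suc 0)) (x, y)) (at y)"
      by (rule Vy[OF hF oS wS1[OF xy]]) simp
    show ?thesis using pdy_at[OF oD1 xy eqPx1 d] by blast
  qed
  have d1xy: "((\<lambda>t. pdy U (t, y)) has_real_derivative Vf F (-1/2) (Suc (Suc 0)) (x, y)) (at x) \<and> pdx (pdy U) (x, y) = Vf F (-1/2) (Suc (Suc 0)) (x, y)"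
    if xy: "(x, y) \<in> D1" for x y
  proof -
    have d: "((\<lambda>t. Vf F (-1) (Suc 0) (t, y)) has_real_derivative Vf F (-1/2) (Suc (Suc 0)) (x, y)) (at x)"
      by (rule Vx[OF hF oS wS1[OF xy]]) simp
    show ?thesis using pdx_at[OF oD1 xy eqPy1 d] by blast
  qed
  have d1yy: "((\<lambda>t. pdy U (x, t)) has_real_derivative Vf F (-\<i>/2) (Suc (Suc 0)) (x, y)) (at y) \<and> pdy (pdy U) (x, y) = Vf F (-\<i>/2) (Suc (Suc 0)) (x, y)"
    if xy: "(x, y) \<in> D1" for x y
  proof -
    have d: "((\<lambda>t. Vf F (-1) (Suc 0) (x, t)) has_real_derivative Vf F (-\<i>/2) (Suc (Suc 0)) (x, y)) (at y)"
      by (rule Vy[OF hF oS wS1[OF xy]]) simp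
    show ?thesis using pdy_at[OF oD1 xy eqPy1 d] by blast
  qed
  have cV1: "continuous_on D1 (Vf F c k)" for c k
    by (rule Vcont[OF hF oS]) (use wS1 in auto)
  have C1a: "C1_on D1 U"
    by (rule C1_intro[OF d1x d1y]) (auto intro: continuous_on_eq[OF cV1] simp: eqU1 cV1)
  have C1b: "C1_on D1 (pdx U)"
    by (rule C1_intro[OF d1xx d1yx]) (auto intro: continuous_on_eq[OF cV1] simp: eqPx1 cV1)
  have C1c: "C1_on D1 (pdy U)"
    by (rule C1_intro[OF d1xy d1yy]) (auto intro: continuous_on_eq[OF cV1] simp: eqPy1 cV1)
  have C2D1: "C2_on D1 U" unfolding C2_on_def using C1a C1b C1c by blast
  have d2x: "((\<lambda>t. U (t, y)) has_real_derivative Ef F (1/2) (-1/2) (Suc 0) (x, y)) (at x) \<and> pdx U (x, y) = Ef F (1/2) (-1/2) (Suc 0) (x, y)"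
    if xy: "(x, y) \<in> D2" for x y
  proof -
    have d: "((\<lambda>t. Ef F 1 (-1) 0 (t, y)) has_real_derivative Ef F (1/2) (-1/2) (Suc 0) (x, y)) (at x)"
      by (rule Ex[OF hF oS aS2[OF xy]]) simp_all
    show ?thesis using pdx_at[OF oD2 xy eqU2 d] by blast
  qed
  have d2y: "((\<lambda>t. U (x, t)) has_real_derivative Ef F (-1/2) (-1/2) (Suc 0) (x, y)) (at y) \<and> pdy U (x, y) = Ef F (-1/2) (-1/2) (Suc 0) (x, y)"
    if xy: "(x, y) \<in> D2" for x y
  proof -
    have d: "((\<lambda>t. Ef F 1 (-1) 0 (x, t)) has_real_derivative Ef F (-1/2) (-1/2) (Suc 0) (x, y)) (at y)"
      by (rule Ey[OF hF oS aS2[OF xy]]) simp_all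
    show ?thesis using pdy_at[OF oD2 xy eqU2 d] by blast
  qed
  have eqPx2: "pdx U q = Ef F (1/2) (-1/2) (Suc 0) q" if "q \<in> D2" for q using d2x[of "fst q" "snd q"] that by simp
  have eqPy2: "pdy U q = Ef F (-1/2) (-1/2) (Suc 0) q" if "q \<in> D2" for q using d2y[of "fst q" "snd q"] that by simp
  have d2xx: "((\<lambda>t. pdx U (t, y)) has_real_derivative Ef F (1/4) (-1/4) (Suc (Suc 0)) (x, y)) (at x) \<and> pdx (pdx U) (x, y) = Ef F (1/4) (-1/4) (Suc (Suc 0)) (x, y)"
    if xy: "(x, y) \<in> D2" for x y
  proof -
    have d: "((\<lambda>t. Ef F (1/2) (-1/2) (Suc 0) (t, y)) has_real_derivative Ef F (1/4) (-1/4) (Suc (Suc 0)) (x, y)) (at x)"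
      by (rule Ex[OF hF oS aS2[OF xy]]) simp_all
    show ?thesis using pdx_at[OF oD2 xy eqPx2 d] by blast
  qed
  have d2yx: "((\<lambda>t. pdx U (x, t)) has_real_derivative Ef F (-1/4) (-1/4) (Suc (Suc 0)) (x, y)) (at y) \<and> pdy (pdx U) (x, y) = Ef F (-1/4) (-1/4) (Suc (Suc 0)) (x, y)"
    if xy: "(x, y) \<in> D2" for x y
  proof -
    have d: "((\<lambda>t. Ef F (1/2) (-1/2) (Suc 0) (x, t)) has_real_derivative Ef F (-1/4) (-1/4) (Suc (Suc 0)) (x, y)) (at y)"
      by (rule Ey[OF hF oS aS2[OF xy]]) simp_all
    show ?thesis using pdy_at[OF oD2 xy eqPx2 d] by blast
  qed
  have d2xy: "((\<lambda>t. pdy U (t, y)) has_real_derivative Ef F (-1/4) (-1/4) (Suc (Suc 0)) (x, y)) (at x) \<and> pdx (pdy U) (x, y) = Ef F (-1/4) (-1/4) (Suc (Suc 0)) (x, y)"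
    if xy: "(x, y) \<in> D2" for x y
  proof -
    have d: "((\<lambda>t. Ef F (-1/2) (-1/2) (Suc 0) (t, y)) has_real_derivative Ef F (-1/4) (-1/4) (Suc (Suc 0)) (x, y)) (at x)"
      by (rule Ex[OF hF oS aS2[OF xy]]) simp_all
    show ?thesis using pdx_at[OF oD2 xy eqPy2 d] by blast
  qed
  have d2yy: "((\<lambda>t. pdy U (x, t)) has_real_derivative Ef F (1/4) (-1/4) (Suc (Suc 0)) (x, y)) (at y) \<and> pdy (pdy U) (x, y) = Ef F (1/4) (-1/4) (Suc (Suc 0)) (x, y)"
    if xy: "(x, y) \<in> D2" for x y
  proof -
    have d: "((\<lambda>t. Ef F (-1/2) (-1/2) (Suc 0) (x, t)) has_real_derivative Ef F (1/4) (-1/4) (Suc (Suc 0)) (x, y)) (at y)"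
      by (rule Ey[OF hF oS aS2[OF xy]]) simp_all
    show ?thesis using pdy_at[OF oD2 xy eqPy2 d] by blast
  qed
  have cE2: "continuous_on D2 (Ef F c1 c2 k)" for c1 c2 k
    by (rule Econt[OF hF oS]) (use inS_dn D2dn in auto)
  have C2a: "C1_on D2 U"
    by (rule C1_intro[OF d2x d2y]) (auto intro: continuous_on_eq[OF cE2] simp: eqU2 cE2)
  have C2b: "C1_on D2 (pdx U)"
    by (rule C1_intro[OF d2xx d2yx]) (auto intro: continuous_on_eq[OF cE2] simp: eqPx2 cE2)
  have C2c: "C1_on D2 (pdy U)"
    by (rule C1_intro[OF d2xy d2yy]) (auto intro: continuous_on_eq[OF cE2] simp: eqPy2 cE2)
  have C2D2: "C2_on D2 U" unfolding C2_on_def using C2a C2b C2c by blast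
  have wseg: "(Complex x 0 - 1) / 2 = complex_of_real ((x - 1) / 2)" for x
    by (simp add: complex_eq_iff)
  have segR: "(x - 1) / 2 \<in> R" if "-1 < x" "x < 1" for x
    using IR that by auto
  have U_seg: "U (t, 0) = 0" for t by (simp add: U_def)
  have V0seg: "Vf F (2*\<i>) 0 (x, 0) = 0" if "-1 < x" "x < 1" for x
    using Fre[of "(x-1)/2"] segR[OF that] by (simp add: Vf_def wseg g0 inR)
  have V1seg: "Vf F \<i> (Suc 0) (x, 0) = 0" if "-1 < x" "x < 1" for x
    using Im0[OF segR[OF that], of "Suc 0"] by (simp add: Vf_def wseg)
  have V1yseg: "Vf F (-1) (Suc 0) (x, 0) = Ef F (-1/2) (-1/2) (Suc 0) (x, 0)" for x
    by (simp add: Vf_def Ef_def fd_def wseg)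
  define Ux where "Ux = (\<lambda>p. if snd p > 0 then Vf F \<i> (Suc 0) p else Ef F (1/2) (-1/2) (Suc 0) p)"
  define Uy where "Uy = (\<lambda>p. if snd p > 0 then Vf F (-1) (Suc 0) p else Ef F (-1/2) (-1/2) (Suc 0) p)"
  have dDx: "((\<lambda>t. U (t, y)) has_real_derivative Ux (x, y)) (at x) \<and> pdx U (x, y) = Ux (x, y)"
    if xy: "(x, y) \<in> Dall" for x y
  proof (cases y "0::real" rule: linorder_cases)
    case less
    then have "(x, y) \<in> D2" using xy by (auto simp: memDall memD2)
    then show ?thesis using d2x less by (simp add: Ux_def)
  next
    case greater
    then have "(x, y) \<in> D1" using xy by (auto simp: memDall memD1)
    then show ?thesis using d1x greater by (simp add: Ux_def)
  next
    case equal
    have d: "((\<lambda>t. U (t, y)) has_real_derivative 0) (at x)" using equal by (simp add: U_seg)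
    have "Ux (x, y) = 0" using equal by (simp add: Ux_def Ef_def)
    then show ?thesis using d DERIV_imp_deriv[OF d] by (simp add: pdx_def)
  qed
  have dDy: "((\<lambda>t. U (x, t)) has_real_derivative Uy (x, y)) (at y) \<and> pdy U (x, y) = Uy (x, y)"
    if xy: "(x, y) \<in> Dall" for x y
  proof -
    have d: "((\<lambda>t. U (x, t)) has_real_derivative Uy (x, y)) (at y)"
    proof (cases y "0::real" rule: linorder_cases)
      case less
      then have "(x, y) \<in> D2" using xy by (auto simp: memDall memD2)
      then show ?thesis using d2y less by (simp add: Uy_def)
    next
      case greater
      then have "(x, y) \<in> D1" using xy by (auto simp: memDall memD1)
      then show ?thesis using d1y greater by (simp add: Uy_def)
    next
      case equal
      have x: "-1 < x" "x < 1" using xy equal by (auto simp: memDall)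
      have x0: "(x, 0) \<in> Ddn" using x by (simp add: memDdn)
      have x0u: "(x, 0) \<in> Dup" using x \<epsilon>(1) by (simp add: memDup)
      have Uy0: "Uy (x, 0) = Ef F (-1/2) (-1/2) (Suc 0) (x, 0)" by (simp add: Uy_def)
      have left0: "((\<lambda>t. Ef F 1 (-1) 0 (x, t)) has_real_derivative Ef F (-1/2) (-1/2) (Suc 0) (x, 0)) (at 0)"
        by (rule Ey[OF hF oS]) (use inS_dn[OF x0] in simp_all)
      have left: "((\<lambda>t. U (x, t)) has_real_derivative Ef F (-1/2) (-1/2) (Suc 0) (x, 0)) (at 0 within {..0})"
      proof (rule has_field_derivative_transform_within[OF has_field_derivative_at_within[OF left0], of "min (1 + x) (1 - x)"])
        show "0 < min (1 + x) (1 - x)" using x by simp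
        show "0 \<in> {..0::real}" by simp
        fix t :: real assume t: "t \<in> {..0}" "dist t 0 < min (1 + x) (1 - x)"
        then have "(x, t) \<in> Ddn" by (auto simp: memDdn dist_real_def)
        then show "Ef F 1 (-1) 0 (x, t) = U (x, t)" using U_dn by simp
      qed
      have right0: "((\<lambda>t. Vf F (2*\<i>) 0 (x, t)) has_real_derivative Vf F (-1) (Suc 0) (x, 0)) (at 0)"
        by (rule Vy[OF hF oS inS_up[OF x0u, simplified]]) simp
      then have right0: "((\<lambda>t. Vf F (2*\<i>) 0 (x, t)) has_real_derivative Ef F (-1/2) (-1/2) (Suc 0) (x, 0)) (at 0)"
        by (simp only: V1yseg)
      have right: "((\<lambda>t. U (x, t)) has_real_derivative Ef F (-1/2) (-1/2) (Suc 0) (x, 0)) (at 0 within {0..})"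
      proof (rule has_field_derivative_transform_within[OF has_field_derivative_at_within[OF right0], of 1])
        show "0 < (1::real)" by simp
        show "0 \<in> {0::real..}" by simp
        fix t :: real assume t: "t \<in> {0..}" "dist t 0 < 1"
        show "Vf F (2*\<i>) 0 (x, t) = U (x, t)"
        proof (cases "t = 0")
          case True then show ?thesis using V0seg[OF x] U_seg by simp
        next
          case False then show ?thesis using t U_up[of "(x,t)"] by simp
        qed
      qed
      show ?thesis using deriv_split[OF left right] equal Uy0 by simp
    qed
    then show ?thesis using DERIV_imp_deriv[OF d] by (simp add: pdy_def)
  qed
  have cl_up: "closedin (top_of_set (Dup \<union> Ddn)) Dup"
  proof -
    have eq: "Dup = (Dup \<union> Ddn) \<inter> {p. 0 \<le> snd p}"
      using \<epsilon>(1) by (auto simp: Dup_def Ddn_def)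
    have c: "closedin (top_of_set (Dup \<union> Ddn)) ((Dup \<union> Ddn) \<inter> {p. 0 \<le> snd p})"
      by (rule closedin_closed_Int) (intro closed_Collect_le continuous_intros)
    show ?thesis by (subst (2) eq) (rule c)
  qed
  have cl_dn: "closedin (top_of_set (Dup \<union> Ddn)) Ddn"
  proof -
    have eq: "Ddn = (Dup \<union> Ddn) \<inter> {p. snd p \<le> 0}"
      using \<epsilon>(1) by (auto simp: Dup_def Ddn_def)
    have c: "closedin (top_of_set (Dup \<union> Ddn)) ((Dup \<union> Ddn) \<inter> {p. snd p \<le> 0})"
      by (rule closedin_closed_Int) (intro closed_Collect_le continuous_intros)
    show ?thesis by (subst (2) eq) (rule c)
  qed
  have pw: "continuous_on Dall (\<lambda>p. if snd p > 0 then A p else B p)"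
    if "continuous_on Dup A" "continuous_on Ddn B" "\<And>x. -1 < x \<Longrightarrow> x < 1 \<Longrightarrow> A (x, 0) = B (x, 0)" for A B
    unfolding Dall_eq
  proof (rule continuous_on_cases_local[OF cl_up cl_dn that(1,2)])
    fix p assume "p \<in> Dup \<and> \<not> 0 < snd p \<or> p \<in> Ddn \<and> 0 < snd p"
    then have "snd p = 0" "-1 < fst p" "fst p < 1" by (auto simp: Dup_def Ddn_def)
    then show "A p = B p" using that(3)[of "fst p"] by (cases p) auto
  qed
  have cVup: "continuous_on Dup (Vf F c k)" for c k
    by (rule Vcont[OF hF oS]) (use inS_up in auto)
  have cEdn: "continuous_on Ddn (Ef F c1 c2 k)" for c1 c2 k
    by (rule Econt[OF hF oS]) (use inS_dn in auto)
  have UD: "U p = (if snd p > 0 then Vf F (2*\<i>) 0 p else Ef F 1 (-1) 0 p)" if "p \<in> Dall" for p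
  proof (cases "snd p > 0")
    case True then show ?thesis using U_up by simp
  next
    case False
    then have "p \<in> Ddn" using that by (cases p) (auto simp: memDall memDdn)
    then show ?thesis using False U_dn by simp
  qed
  have cU: "continuous_on Dall U"
    by (rule continuous_on_eq[OF pw[OF cVup cEdn]]) (use V0seg UD in \<open>auto simp: Ef_def\<close>)
  have cUx: "continuous_on Dall Ux"
    unfolding Ux_def by (rule pw[OF cVup cEdn]) (use V1seg in \<open>auto simp: Ef_def\<close>)
  have cUy: "continuous_on Dall Uy"
    unfolding Uy_def by (rule pw[OF cVup cEdn]) (use V1yseg in auto)
  have C1D: "C1_on Dall U" by (rule C1_intro[OF dDx dDy cU cUx cUy])
  have Upos: "U q > 0" if q: "q \<in> D1" for q
  proof -
    obtain x y where qxy: "q = (x, y)" by (cases q)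
    have xy: "-1 < x" "x < 1" "0 < y" "y < 2*\<epsilon>" using q by (auto simp: qxy memD1)
    define p where "p = (x - 1) / 2"
    have p: "p \<in> {-1..0}" using xy by (auto simp: p_def)
    define \<phi> where "\<phi> s = Re (- \<i> * F (\<i> * complex_of_real s + complex_of_real p))" for s
    have der: "\<exists>L. (\<phi> has_real_derivative L) (at s) \<and> L < 0" if s: "0 \<le> s" "s \<le> y/2" for s
    proof -
      define z where "z = \<i> * complex_of_real s + complex_of_real p"
      have zT: "z \<in> T" using ballT[OF p, of s] s xy by (simp add: z_def add.commute)
      have zS: "z \<in> S" using zT TS by blast
      have "(F has_field_derivative gk F (Suc 0) z) (at z)"
        using gk_der[OF hF oS zS, of 0] by (simp add: g0)
      then have "((\<lambda>w. - \<i> * F w) has_field_derivative - \<i> * gk F (Suc 0) z) (at (\<i> * complex_of_real s + complex_of_real p))"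
        by (auto intro!: derivative_eq_intros simp: z_def)
      from Re_aff[OF this] have "(\<phi> has_real_derivative Re (gk F (Suc 0) z)) (at s)"
        by (simp add: \<phi>_def[abs_def])
      moreover have "Re (gk F (Suc 0) z) < 0" using zT by (simp add: T_def)
      ultimately show ?thesis by blast
    qed
    have "\<phi> 0 > \<phi> (y/2)"
      by (rule DERIV_neg_imp_decreasing[of 0 "y/2" \<phi>]) (use xy der in auto)
    moreover have "\<phi> 0 = 0" using Fre[OF Sre[OF p]] by (simp add: \<phi>_def)
    moreover have "U q = - 2 * \<phi> (y/2)"
    proof -
      have e: "(Complex x y - 1) / 2 = \<i> * complex_of_real (y/2) + complex_of_real p"
        by (simp add: complex_eq_iff p_def)
      have "U q = Re (2*\<i> * F ((Complex x y - 1) / 2))" using xy by (simp add: qxy U_def)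
      also have "\<dots> = Re (2*\<i> * F (\<i> * complex_of_real (y/2) + complex_of_real p))" by (simp only: e)
      also have "\<dots> = - 2 * \<phi> (y/2)" by (simp add: \<phi>_def)
      finally show ?thesis .
    qed
    ultimately show ?thesis by simp
  qed
  have Uneg: "U q < 0" if q: "q \<in> D2" for q
  proof -
    obtain x y where qxy: "q = (x, y)" by (cases q)
    have xy: "y < 0" "y > -x-1" "y > x-1" using q by (auto simp: qxy memD2)
    have "f ((x + y - 1)/2) > f ((x - y - 1)/2)"
    proof (rule DERIV_neg_imp_decreasing[of "(x + y - 1)/2" "(x - y - 1)/2" f])
      show "(x + y - 1)/2 < (x - y - 1)/2" using xy by simp
      fix t assume t: "(x + y - 1)/2 \<le> t" "t \<le> (x - y - 1)/2"
      then have "t \<in> {-1..0}" using xy by auto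
      then show "\<exists>L. (f has_real_derivative L) (at t) \<and> L < 0"
        using fder fneg IR by blast
    qed
    then show ?thesis using xy by (simp add: qxy U_def)
  qed
  have eqn: "pdx (pdx U) q + sgn (U q) * pdy (pdy U) q = 0" if q: "q \<in> D1 \<union> D2" for q
  proof -
    obtain x y where qxy: "q = (x, y)" by (cases q)
    show ?thesis
    proof (cases "q \<in> D1")
      case True
      then have "sgn (U q) = 1" using Upos by simp
      moreover have "pdx (pdx U) q = Vf F (\<i>/2) (Suc (Suc 0)) q" "pdy (pdy U) q = Vf F (-\<i>/2) (Suc (Suc 0)) q"
        using d1xx[of x y] d1yy[of x y] True by (simp_all add: qxy)
      ultimately show ?thesis by (simp add: Vf_def)
    next
      case False
      then have D2: "q \<in> D2" using q by blast
      then have "sgn (U q) = -1" using Uneg by simp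
      moreover have "pdx (pdx U) q = Ef F (1/4) (-1/4) (Suc (Suc 0)) q" "pdy (pdy U) q = Ef F (1/4) (-1/4) (Suc (Suc 0)) q"
        using d2xx[of x y] d2yy[of x y] D2 by (simp_all add: qxy)
      ultimately show ?thesis by simp
    qed
  qed
  have bdry: "U (x, - x - 1) = f x" if "x \<in> {-1..0}" for x
  proof -
    have "(x - (- x - 1) - 1) / 2 = x" "(x + (- x - 1) - 1) / 2 = -1" by simp_all
    then show ?thesis using that f_m1 by (simp add: U_def)
  qed
  have formD2: "\<forall>(x, y)\<in>D2. U (x, y) = f ((x - y - 1) / 2) - f ((x + y - 1) / 2)"
    by (auto simp: memD2 U_def)
  have holo: "\<forall>(x, y)\<in>D1. (Complex x y - 1) / 2 \<in> S \<and> (cnj (Complex x y) - 1) / 2 \<in> S \<and>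
           complex_of_real (U (x, y)) = \<i> * (F ((Complex x y - 1) / 2) - F ((cnj (Complex x y) - 1) / 2))"
  proof (clarify)
    fix x y assume xy: "(x, y) \<in> D1"
    have w: "(Complex x y - 1) / 2 \<in> S" by (rule wS1[OF xy])
    have c: "(cnj (Complex x y) - 1) / 2 = cnj ((Complex x y - 1) / 2)" by (simp add: complex_eq_iff)
    have y: "y > 0" using xy by (simp add: memD1)
    show "(Complex x y - 1) / 2 \<in> S \<and> (cnj (Complex x y) - 1) / 2 \<in> S \<and>
           complex_of_real (U (x, y)) = \<i> * (F ((Complex x y - 1) / 2) - F ((cnj (Complex x y) - 1) / 2))"
      unfolding c using w Scnj[OF w] y by (simp add: U_def complex_eq_iff)
  qed
  have D1pos: "D1 \<subseteq> {p. snd p > 0}" by (auto simp: D1_def)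
  have L: "let D = D1 \<union> {(x, 0) | x. -1 < x \<and> x < 1} \<union> D2 in open D \<and> connected D \<and> C1_on D U"
    unfolding Let_def Dall_def[symmetric] using oDall cDall C1D by blast
  have E: "\<forall>p\<in>D1 \<union> D2. pdx (pdx U) p + sgn (U p) * pdy (pdy U) p = 0" using eqn by blast
  have P: "\<forall>p\<in>D1. U p > 0" using Upos by blast
  have N: "\<forall>p\<in>D2. U p < 0" using Uneg by blast
  have B: "\<forall>x\<in>{-1..0}. U (x, - x - 1) = f x" using bdry by blast
  have H1: "\<forall>x\<in>{-1..0::real}. complex_of_real x \<in> S \<and> F (complex_of_real x) = complex_of_real (f x)"
    using Sre Fre by blast
  have H: "\<exists>S F. open S \<and> F holomorphic_on S \<and>
        (\<forall>x\<in>{-1..0::real}. complex_of_real x \<in> S \<and> F (complex_of_real x) = complex_of_real (f x)) \<and>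
        (\<forall>(x, y)\<in>D1. (Complex x y - 1) / 2 \<in> S \<and> (cnj (Complex x y) - 1) / 2 \<in> S \<and>
           complex_of_real (U (x, y)) = \<i> * (F ((Complex x y - 1) / 2) - F ((cnj (Complex x y) - 1) / 2)))"
    apply (rule exI[of _ S], rule exI[of _ F])
    using oS hF H1 holo by (intro conjI)
  show ?thesis
    apply (rule exI[of _ D1], rule exI[of _ U])
    apply (intro conjI)
               apply (rule oD1)
              apply (rule D1pos)
             apply (rule L)
            apply (rule C2D1)
           apply (rule C2D2)
          apply (rule E)
         apply (rule P)
        apply (rule N)
       apply (rule B)
      apply (rule formD2)
     apply (rule H)
    done
qed

end
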